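(* Let $\Gamma$ be a graphical cake represented by a finite tree of minimal height $h\ge 1$, let two agents $A,B$ have valuations $v_A,v_B$ on $\Gamma$, and let $0\le t\le 1$ with entitlement vector $(t,1-t)$. Then there exists a weighted consensus division $(\alpha,\beta)$ of $\Gamma$ such that each of $\alpha$ and $\beta$ has at most $h+1$ connected components.
   Context: A graphical cake represented by a finite graph $\Gamma=(V,E)$ consists of $|E|$ closed intervals, one per edge, with endpoints identified according to the incidence structure of $\Gamma$. A piece is a finite union of subintervals of edges; its connected pieces are its path components under the endpoint identifications. The minimal height of a tree is the minimum over all vertices $R$ of the height of the tree rooted at $R$ (the maximum distance from $R$ to any vertex). A valuation is a non-atomic Borel probability measure on the cake. A division between two agents is a pair of pieces $(\alpha,\beta)$ with $\alpha\cup\beta=\Gamma$ and $\alpha\cap\beta$ finite. Given entitlements $(t,1-t)$, $0\le t\le1$, a division is a weighted consensus division if $v_A(\alpha)=v_B(\alpha)=t$ and $v_A(\beta)=v_B(\beta)=1-t$. *)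

theory Defs
  imports "HOL-Analysis.Analysis" "HOL-Probability.Probability"
begin

text \<open>A finite graph is given by a vertex set V and a set E of edges; each edge is
stored once as an ordered pair (u,v) whose first component is its "0-end" and whose
second component is its "1-end" (the orientation is only used to parametrise the
edge by the unit interval).\<close>

definition adj :: "('v \<times> 'v) set \<Rightarrow> ('v \<times> 'v) set" where
  "adj E = {(u, w). (u, w) \<in> E \<or> (w, u) \<in> E}"

definition is_tree :: "'v set \<Rightarrow> ('v \<times> 'v) set \<Rightarrow> bool" where
  "is_tree V E \<longleftrightarrow> finite V \<and> V \<noteq> {} \<and> E \<subseteq> V \<times> V
     \<and> (\<forall>(u, w) \<in> E. u \<noteq> w \<and> (w, u) \<notin> E)
     \<and> (\<forall>u\<in>V. \<forall>w\<in>V. (u, w) \<in> (adj E)\<^sup>*)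
     \<and> card E + 1 = card V"

definition gdist :: "('v \<times> 'v) set \<Rightarrow> 'v \<Rightarrow> 'v \<Rightarrow> nat" where
  "gdist E u w = (LEAST n. (u, w) \<in> (adj E) ^^ n)"

definition height_at :: "'v set \<Rightarrow> ('v \<times> 'v) set \<Rightarrow> 'v \<Rightarrow> nat" where
  "height_at V E R = Max ((\<lambda>w. gdist E R w) ` V)"

definition min_height :: "'v set \<Rightarrow> ('v \<times> 'v) set \<Rightarrow> nat" where
  "min_height V E = Min ((\<lambda>R. height_at V E R) ` V)"

datatype 'v cake_pt = Vtx 'v | Mid "'v \<times> 'v" real

text \<open>Quotient map from the disjoint union of the edge intervals E \<times> [0,1]
to the cake (endpoints identified with the incident vertices).\<close>
definition cpt :: "('v \<times> 'v) \<times> real \<Rightarrow> 'v cake_pt" where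
  "cpt p = (if snd p = 0 then Vtx (fst (fst p))
            else if snd p = 1 then Vtx (snd (fst p)) else Mid (fst p) (snd p))"

definition quotient_topology :: "'a topology \<Rightarrow> ('a \<Rightarrow> 'b) \<Rightarrow> 'b topology" where
  "quotient_topology X f =
     topology (\<lambda>U. U \<subseteq> f ` topspace X \<and> openin X {x \<in> topspace X. f x \<in> U})"

lemma istopology_quotient:
  "istopology (\<lambda>U. U \<subseteq> f ` topspace X \<and> openin X {x \<in> topspace X. f x \<in> U})"
  unfolding istopology_def
proof (rule conjI; intro allI impI)
  fix S T assume "S \<subseteq> f ` topspace X \<and> openin X {x \<in> topspace X. f x \<in> S}"
    "T \<subseteq> f ` topspace X \<and> openin X {x \<in> topspace X. f x \<in> T}"
  moreover have "{x \<in> topspace X. f x \<in> S \<inter> T} =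
      {x \<in> topspace X. f x \<in> S} \<inter> {x \<in> topspace X. f x \<in> T}" by auto
  ultimately show "S \<inter> T \<subseteq> f ` topspace X \<and> openin X {x \<in> topspace X. f x \<in> S \<inter> T}"
    by (simp add: openin_Int le_infI1)
next
  fix K assume K: "\<forall>S\<in>K. S \<subseteq> f ` topspace X \<and> openin X {x \<in> topspace X. f x \<in> S}"
  have "{x \<in> topspace X. f x \<in> \<Union>K} = (\<Union>S\<in>K. {x \<in> topspace X. f x \<in> S})" by auto
  with K show "\<Union>K \<subseteq> f ` topspace X \<and> openin X {x \<in> topspace X. f x \<in> \<Union>K}"
    by auto
qed

definition edges_top :: "('v \<times> 'v) set \<Rightarrow> (('v \<times> 'v) \<times> real) topology" where
  "edges_top E = subtopology (prod_topology (discrete_topology E) euclideanreal) (E \<times> {0..1})"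

definition cake_top :: "('v \<times> 'v) set \<Rightarrow> 'v cake_pt topology" where
  "cake_top E = quotient_topology (edges_top E) cpt"

definition cake :: "('v \<times> 'v) set \<Rightarrow> 'v cake_pt set" where
  "cake E = topspace (cake_top E)"

definition cake_borel :: "('v \<times> 'v) set \<Rightarrow> 'v cake_pt measure" where
  "cake_borel E = sigma (topspace (cake_top E)) {U. openin (cake_top E) U}"

definition valuation :: "('v \<times> 'v) set \<Rightarrow> 'v cake_pt measure \<Rightarrow> bool" where
  "valuation E M \<longleftrightarrow> sets M = sets (cake_borel E) \<and> space M = cake E \<and> prob_space M
     \<and> (\<forall>x \<in> space M. emeasure M {x} = 0)"

text \<open>A piece is a finite union of (closed, nondegenerate) subintervals of edges.
It is described by a finite set of triples (e, a, b) standing for the subinterval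
[a,b] of edge e.\<close>
definition piece_desc :: "('v \<times> 'v) set \<Rightarrow> (('v \<times> 'v) \<times> real \<times> real) set \<Rightarrow> bool" where
  "piece_desc E P \<longleftrightarrow> finite P \<and> (\<forall>(e, a, b) \<in> P. e \<in> E \<and> 0 \<le> a \<and> a < b \<and> b \<le> 1)"

definition piece_set :: "(('v \<times> 'v) \<times> real \<times> real) set \<Rightarrow> 'v cake_pt set" where
  "piece_set P = cpt ` (\<Union>(e, a, b) \<in> P. {e} \<times> {a..b})"

definition is_piece :: "('v \<times> 'v) set \<Rightarrow> 'v cake_pt set \<Rightarrow> bool" where
  "is_piece E S \<longleftrightarrow> (\<exists>P. piece_desc E P \<and> S = piece_set P)"

definition num_components :: "('v \<times> 'v) set \<Rightarrow> 'v cake_pt set \<Rightarrow> nat" where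
  "num_components E S = card (path_components_of (subtopology (cake_top E) S))"

definition is_division :: "('v \<times> 'v) set \<Rightarrow> 'v cake_pt set \<Rightarrow> 'v cake_pt set \<Rightarrow> bool" where
  "is_division E \<alpha> \<beta> \<longleftrightarrow> is_piece E \<alpha> \<and> is_piece E \<beta> \<and> \<alpha> \<union> \<beta> = cake E \<and> finite (\<alpha> \<inter> \<beta>)"

definition weighted_consensus ::
  "'v cake_pt measure \<Rightarrow> 'v cake_pt measure \<Rightarrow> real \<Rightarrow> 'v cake_pt set \<Rightarrow> 'v cake_pt set \<Rightarrow> bool" where
  "weighted_consensus vA vB t \<alpha> \<beta> \<longleftrightarrow>
     measure vA \<alpha> = t \<and> measure vB \<alpha> = t \<and> measure vA \<beta> = 1 - t \<and> measure vB \<beta> = 1 - t"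

end

theory Submission
  imports Defs "HOL-Library.List_Lexorder" "HOL-Library.Sublist"
begin

lemma circle_chord:
  fixes h :: "real \<Rightarrow> real"
  assumes cont: "continuous_on {0..1} h" and h01: "h 0 = h 1" and t: "0 \<le> t" "t \<le> 1"
  shows "\<exists>s1 s2. 0 \<le> s1 \<and> s1 \<le> s2 \<and> s2 \<le> 1 \<and> h s1 = h s2 \<and> (s2 - s1 = t \<or> s2 - s1 = 1 - t)"
proof (cases "t = 0 \<or> t = 1")
  case True
  then show ?thesis
  proof
    assume "t = 0" then show ?thesis by (rule_tac x=0 in exI, rule_tac x=0 in exI) auto
  next
    assume "t = 1" then show ?thesis using h01 by (rule_tac x=0 in exI, rule_tac x=1 in exI) auto
  qed
next
  case False
  with t have t0: "0 < t" "t < 1" by auto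
  define d where "d s = (if s \<le> 1 - t then h (s+t) - h s else h (s+t-1) - h s)" for s
  have c1: "continuous_on {x \<in> {0..1}. x \<le> 1 - t} (\<lambda>s. h (s+t) - h s)"
  proof (intro continuous_on_diff)
    show "continuous_on {x \<in> {0..1}. x \<le> 1 - t} (\<lambda>s. h (s + t))"
      by (rule continuous_on_compose2[OF cont, of _ "\<lambda>s. s+t"]) (use t0 in \<open>auto intro!: continuous_intros\<close>)
    show "continuous_on {x \<in> {0..1}. x \<le> 1 - t} h"
      by (rule continuous_on_subset[OF cont]) auto
  qed
  have c2: "continuous_on {x \<in> {0..1}. 1 - t \<le> x} (\<lambda>s. h (s+t-1) - h s)"
  proof (intro continuous_on_diff)
    show "continuous_on {x \<in> {0..1}. 1 - t \<le> x} (\<lambda>s. h (s + t - 1))"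
      by (rule continuous_on_compose2[OF cont, of _ "\<lambda>s. s+t-1"]) (use t0 in \<open>auto intro!: continuous_intros\<close>)
    show "continuous_on {x \<in> {0..1}. 1 - t \<le> x} h"
      by (rule continuous_on_subset[OF cont]) auto
  qed
  have dc: "continuous_on {0..1} d"
    unfolding d_def
    by (rule continuous_on_cases_le[OF c1 c2 continuous_on_id]) (auto simp: h01)
  obtain sM where sM: "sM \<in> {0..1}" "\<And>y. y \<in> {0..1} \<Longrightarrow> h y \<le> h sM"
    using continuous_attains_sup[OF compact_Icc _ cont] by fastforce
  obtain sm where sm: "sm \<in> {0..1}" "\<And>y. y \<in> {0..1} \<Longrightarrow> h sm \<le> h y"
    using continuous_attains_inf[OF compact_Icc _ cont] by fastforce
  have dM: "d sM \<le> 0" using sM t0 unfolding d_def by (auto intro!: sM(2))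
  have dm: "d sm \<ge> 0" using sm t0 unfolding d_def by (auto intro!: sm(2))
  have "\<exists>s\<in>{0..1}. d s = 0"
  proof (cases "sm \<le> sM")
    case True
    then obtain s where "s \<ge> sm" "s \<le> sM" "d s = 0"
      using IVT2'[of d sM 0 sm] dM dm continuous_on_subset[OF dc, of "{sm..sM}"] sm sM by auto
    then show ?thesis using sm sM by auto
  next
    case False
    then obtain s where "s \<ge> sM" "s \<le> sm" "d s = 0"
      using IVT'[of d sM 0 sm] dM dm continuous_on_subset[OF dc, of "{sM..sm}"] sm sM by auto
    then show ?thesis using sm sM by auto
  qed
  then obtain s where s: "s \<in> {0..1}" "d s = 0" by auto
  show ?thesis
  proof (cases "s \<le> 1 - t")
    case True
    then show ?thesis using s t0 unfolding d_def
      by (rule_tac x=s in exI, rule_tac x="s+t" in exI) auto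
  next
    case False
    then show ?thesis using s t0 unfolding d_def
      by (rule_tac x="s+t-1" in exI, rule_tac x="s" in exI) auto
  qed
qed

lemma strict_chord:
  fixes FA FB :: "real \<Rightarrow> real" and L t :: real
  assumes L: "L > 0" and cA: "continuous_on {0..L} FA" and cB: "continuous_on {0..L} FB"
    and sm: "strict_mono_on {0..L} FA" and A0: "FA 0 = 0" and A1: "FA L = 1"
    and B0: "FB 0 = 0" and B1: "FB L = 1" and t: "0 \<le> t" "t \<le> 1"
  shows "\<exists>x y. 0 \<le> x \<and> x \<le> y \<and> y \<le> L \<and> FA y - FA x = FB y - FB x
              \<and> (FA y - FA x = t \<or> FA y - FA x = 1 - t)"
proof -
  have inj: "inj_on FA {0..L}" using sm strict_mono_on_imp_inj_on by blast
  have img: "FA ` {0..L} = {0..1}"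
  proof
    show "FA ` {0..L} \<subseteq> {0..1}"
    proof
      fix y assume "y \<in> FA ` {0..L}"
      then obtain x where x: "x \<in> {0..L}" "y = FA x" by auto
      have "FA 0 \<le> FA x" using x sm L by (cases "x = 0") (auto simp: strict_mono_on_def intro: less_imp_le)
      moreover have "FA x \<le> FA L" using x sm L by (cases "x = L") (auto simp: strict_mono_on_def intro: less_imp_le)
      ultimately show "y \<in> {0..1}" using x A0 A1 by auto
    qed
    show "{0..1} \<subseteq> FA ` {0..L}"
    proof
      fix y :: real assume "y \<in> {0..1}"
      then obtain x where "x \<ge> 0" "x \<le> L" "FA x = y"
        using IVT'[of FA 0 y L] cA A0 A1 L by auto
      then show "y \<in> FA ` {0..L}" by auto
    qed
  qed
  define q where "q = the_inv_into {0..L} FA"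
  have qc: "continuous_on {0..1} q"
    using continuous_on_inv_into[OF cA compact_Icc inj] img unfolding q_def by simp
  have q_in: "q s \<in> {0..L}" if "s \<in> {0..1}" for s
    using the_inv_into_into[OF inj, of s "{0..L}"] img that unfolding q_def by auto
  have Aq: "FA (q s) = s" if "s \<in> {0..1}" for s
    using f_the_inv_into_f[OF inj, of s] img that unfolding q_def by auto
  have q0: "q 0 = 0" using the_inv_into_f_f[OF inj, of 0] A0 L unfolding q_def by auto
  have q1: "q 1 = L" using the_inv_into_f_f[OF inj, of L] A1 L unfolding q_def by auto
  define h where "h s = FB (q s) - s" for s
  have hc: "continuous_on {0..1} h"
    unfolding h_def
    by (intro continuous_on_diff continuous_on_id continuous_on_compose2[OF cB qc]) (use q_in in auto)
  have h01: "h 0 = h 1" using q0 q1 B0 B1 unfolding h_def by simp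
  obtain s1 s2 where s: "0 \<le> s1" "s1 \<le> s2" "s2 \<le> 1" "h s1 = h s2" "s2 - s1 = t \<or> s2 - s1 = 1 - t"
    using circle_chord[OF hc h01 t] by blast
  have qs1: "q s1 \<in> {0..L}" and qs2: "q s2 \<in> {0..L}" using q_in s by auto
  have le: "q s1 \<le> q s2"
  proof (rule ccontr)
    assume "\<not> q s1 \<le> q s2"
    then have "FA (q s2) < FA (q s1)" using sm qs1 qs2 by (auto simp: strict_mono_on_def)
    then show False using Aq s by auto
  qed
  show ?thesis
    using qs1 qs2 le s Aq[of s1] Aq[of s2] unfolding h_def
    by (rule_tac x="q s1" in exI, rule_tac x="q s2" in exI) auto
qed

lemma mono_chord:
  fixes GA GB :: "real \<Rightarrow> real" and L t :: real
  assumes L: "L > 0" and cA: "continuous_on {0..L} GA" and cB: "continuous_on {0..L} GB"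
    and mA: "mono_on {0..L} GA" and mB: "mono_on {0..L} GB" and A0: "GA 0 = 0" and A1: "GA L = 1"
    and B0: "GB 0 = 0" and B1: "GB L = 1" and t: "0 \<le> t" "t \<le> 1"
  shows "\<exists>x y. 0 \<le> x \<and> x \<le> y \<and> y \<le> L \<and> GA y - GA x = GB y - GB x
              \<and> (GA y - GA x = t \<or> GA y - GA x = 1 - t)"
proof -
  define e :: "nat \<Rightarrow> real" where "e n = 1 / (Suc n)" for n
  have e_pos: "e n > 0" for n unfolding e_def by auto
  define F where "F G n x = (G x + e n * x / L) / (1 + e n)" for G :: "real \<Rightarrow> real" and n x
  have Fc: "continuous_on {0..L} (F G n)" if "continuous_on {0..L} G" for G n
    unfolding F_def using e_pos[of n] L by (intro continuous_intros that) auto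
  have Fsm: "strict_mono_on {0..L} (F G n)" if "mono_on {0..L} G" for G n
  proof (rule strict_mono_onI)
    fix r s assume rs: "r \<in> {0..L}" "s \<in> {0..L}" "r < s"
    have "G r \<le> G s" using that rs by (auto simp: mono_on_def)
    moreover have "e n * r / L < e n * s / L" using rs e_pos[of n] L by (simp add: divide_strict_right_mono)
    ultimately show "F G n r < F G n s" unfolding F_def using e_pos[of n]
      by (simp add: divide_strict_right_mono)
  qed
  have key: "\<exists>xy. fst xy \<in> {0..L} \<and> snd xy \<in> {0..L} \<and> fst xy \<le> snd xy
     \<and> F GA n (snd xy) - F GA n (fst xy) = F GB n (snd xy) - F GB n (fst xy)
     \<and> (F GA n (snd xy) - F GA n (fst xy) - t) * (F GA n (snd xy) - F GA n (fst xy) - (1 - t)) = 0" for n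
  proof -
    have "F GA n 0 = 0" "F GA n L = 1" "F GB n 0 = 0" "F GB n L = 1"
      unfolding F_def using A0 A1 B0 B1 L e_pos[of n] by auto
    then obtain x y where "0 \<le> x \<and> x \<le> y \<and> y \<le> L \<and> F GA n y - F GA n x = F GB n y - F GB n x
              \<and> (F GA n y - F GA n x = t \<or> F GA n y - F GA n x = 1 - t)"
      using strict_chord[OF L Fc[OF cA] Fc[OF cB] Fsm[OF mA] _ _ _ _ t] by blast
    then show ?thesis by (rule_tac x="(x,y)" in exI) auto
  qed
  then obtain xy where xy: "\<And>n. fst (xy n) \<in> {0..L} \<and> snd (xy n) \<in> {0..L} \<and> fst (xy n) \<le> snd (xy n)
     \<and> F GA n (snd (xy n)) - F GA n (fst (xy n)) = F GB n (snd (xy n)) - F GB n (fst (xy n))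
     \<and> (F GA n (snd (xy n)) - F GA n (fst (xy n)) - t) * (F GA n (snd (xy n)) - F GA n (fst (xy n)) - (1 - t)) = 0"
    by metis
  have "seq_compact ({0..L} \<times> {0..L})"
    by (intro compact_imp_seq_compact compact_Times compact_Icc)
  moreover have "\<forall>n. xy n \<in> {0..L} \<times> {0..L}" using xy by (simp add: mem_Times_iff)
  ultimately obtain l r where l: "l \<in> {0..L} \<times> {0..L}" and r: "strict_mono r" and lim: "(xy \<circ> r) \<longlonglongrightarrow> l"
    unfolding seq_compact_def by blast
  define x where "x = fst l"
  define y where "y = snd l"
  have xl: "(\<lambda>n. fst (xy (r n))) \<longlonglongrightarrow> x" unfolding x_def using tendsto_fst[OF lim] by (simp add: o_def)
  have yl: "(\<lambda>n. snd (xy (r n))) \<longlonglongrightarrow> y" unfolding y_def using tendsto_snd[OF lim] by (simp add: o_def)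
  have xin: "x \<in> {0..L}" and yin: "y \<in> {0..L}" using l unfolding x_def y_def by (auto simp: mem_Times_iff)
  have GAx: "(\<lambda>n. GA (fst (xy (r n)))) \<longlonglongrightarrow> GA x"
    using continuous_on_tendsto_compose[OF cA xl xin] xy by auto
  have GAy: "(\<lambda>n. GA (snd (xy (r n)))) \<longlonglongrightarrow> GA y"
    using continuous_on_tendsto_compose[OF cA yl yin] xy by auto
  have GBx: "(\<lambda>n. GB (fst (xy (r n)))) \<longlonglongrightarrow> GB x"
    using continuous_on_tendsto_compose[OF cB xl xin] xy by auto
  have GBy: "(\<lambda>n. GB (snd (xy (r n)))) \<longlonglongrightarrow> GB y"
    using continuous_on_tendsto_compose[OF cB yl yin] xy by auto
  have el: "(\<lambda>n. e (r n)) \<longlonglongrightarrow> 0"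
  proof -
    have "e \<longlonglongrightarrow> 0" unfolding e_def using LIMSEQ_inverse_real_of_nat
      by (simp add: inverse_eq_divide)
    then show ?thesis using LIMSEQ_subseq_LIMSEQ[OF _ r] by (simp add: o_def)
  qed
  have FAl: "(\<lambda>n. F GA (r n) (snd (xy (r n))) - F GA (r n) (fst (xy (r n)))) \<longlonglongrightarrow> GA y - GA x"
  proof -
    have "(\<lambda>n. (GA (snd (xy (r n))) + e (r n) * snd (xy (r n)) / L) / (1 + e (r n))
       - (GA (fst (xy (r n))) + e (r n) * fst (xy (r n)) / L) / (1 + e (r n)))
       \<longlonglongrightarrow> (GA y + 0 * y / L) / (1 + 0) - (GA x + 0 * x / L) / (1 + 0)"
      using L by (intro tendsto_intros GAx GAy xl yl el) auto
    then show ?thesis unfolding F_def by simp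
  qed
  have FBl: "(\<lambda>n. F GB (r n) (snd (xy (r n))) - F GB (r n) (fst (xy (r n)))) \<longlonglongrightarrow> GB y - GB x"
  proof -
    have "(\<lambda>n. (GB (snd (xy (r n))) + e (r n) * snd (xy (r n)) / L) / (1 + e (r n))
       - (GB (fst (xy (r n))) + e (r n) * fst (xy (r n)) / L) / (1 + e (r n)))
       \<longlonglongrightarrow> (GB y + 0 * y / L) / (1 + 0) - (GB x + 0 * x / L) / (1 + 0)"
      using L by (intro tendsto_intros GBx GBy xl yl el) auto
    then show ?thesis unfolding F_def by simp
  qed
  have "(\<lambda>n. F GA (r n) (snd (xy (r n))) - F GA (r n) (fst (xy (r n)))) =
        (\<lambda>n. F GB (r n) (snd (xy (r n))) - F GB (r n) (fst (xy (r n))))"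
    using xy by (intro ext) metis
  then have eq: "GA y - GA x = GB y - GB x"
    using LIMSEQ_unique[OF FAl] FBl by simp
  have prodl: "(\<lambda>n. (F GA (r n) (snd (xy (r n))) - F GA (r n) (fst (xy (r n))) - t) *
      (F GA (r n) (snd (xy (r n))) - F GA (r n) (fst (xy (r n))) - (1 - t))) \<longlonglongrightarrow> (GA y - GA x - t) * (GA y - GA x - (1 - t))"
    by (intro tendsto_intros FAl)
  moreover have "(\<lambda>n. (F GA (r n) (snd (xy (r n))) - F GA (r n) (fst (xy (r n))) - t) *
      (F GA (r n) (snd (xy (r n))) - F GA (r n) (fst (xy (r n))) - (1 - t))) = (\<lambda>n. 0)"
    using xy by (intro ext) metis
  ultimately have "(GA y - GA x - t) * (GA y - GA x - (1 - t)) = 0"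
    using LIMSEQ_unique by fastforce
  then have tt: "GA y - GA x = t \<or> GA y - GA x = 1 - t" by auto
  have "x \<le> y"
    using xl yl xy by (intro LIMSEQ_le[of "\<lambda>n. fst (xy (r n))" x "\<lambda>n. snd (xy (r n))" y]) auto
  then show ?thesis using xin yin eq tt by (rule_tac x=x in exI, rule_tac x=y in exI) auto
qed

lemma strict_prefix_less: "strict_prefix p r \<Longrightarrow> p < (r :: 'a :: linorder list)"
proof (induction p arbitrary: r)
  case Nil then show ?case by (cases r) auto
next
  case (Cons a p) then show ?case by (cases r) auto
qed

lemma prefix_between: "prefix p r \<Longrightarrow> p \<le> q \<Longrightarrow> q \<le> (r :: 'a :: linorder list) \<Longrightarrow> prefix p q"
proof (induction p arbitrary: q r)
  case Nil then show ?case by simp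
next
  case (Cons a p)
  then obtain r' where r: "r = a # r'" "prefix p r'" by (cases r) auto
  from Cons.prems(2) obtain b q' where q: "q = b # q'" by (cases q) auto
  from Cons.prems(2,3) r q have "a = b" "p \<le> q'" "q' \<le> r'" by auto
  with Cons.IH r q show ?case by auto
qed

locale rtree =
  fixes V :: "'v set" and E :: "('v \<times> 'v) set" and R :: 'v
  assumes tree: "is_tree V E" and R: "R \<in> V"
begin

lemma finV: "finite V" and Esub: "E \<subseteq> V \<times> V" and conn: "\<And>u w. u \<in> V \<Longrightarrow> w \<in> V \<Longrightarrow> (u, w) \<in> (adj E)\<^sup>*"
  and cardE: "card E + 1 = card V"
  using tree unfolding is_tree_def by auto

lemma finE: "finite E" using finite_subset[OF Esub] finV by blast

lemma adj_sub: "adj E \<subseteq> V \<times> V" using Esub unfolding adj_def by auto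

definition depth :: "'v \<Rightarrow> nat" where "depth w = gdist E R w"

lemma depth_path: "w \<in> V \<Longrightarrow> (R, w) \<in> adj E ^^ depth w"
proof -
  assume "w \<in> V"
  then obtain n where "(R, w) \<in> adj E ^^ n" using conn[OF R] rtrancl_power by blast
  then show ?thesis unfolding depth_def gdist_def by (rule LeastI)
qed

lemma depth_le: "(R, w) \<in> adj E ^^ n \<Longrightarrow> depth w \<le> n"
  unfolding depth_def gdist_def by (rule Least_le)

lemma depth_R: "depth R = 0" using depth_le[of R 0] by simp

lemma depth0: "w \<in> V \<Longrightarrow> depth w = 0 \<Longrightarrow> w = R"
  using depth_path[of w] by simp

lemma par_ex: assumes "w \<in> V" "w \<noteq> R"
  shows "\<exists>u. u \<in> V \<and> Suc (depth u) = depth w \<and> (u, w) \<in> adj E"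
proof -
  obtain m where m: "depth w = Suc m" using depth0 assms by (cases "depth w") auto
  then have "(R, w) \<in> adj E ^^ Suc m" using depth_path assms by metis
  then obtain u where u: "(R, u) \<in> adj E ^^ m" "(u, w) \<in> adj E" by (rule relpow_Suc_E)
  have uV: "u \<in> V" using u(2) adj_sub by auto
  have "depth u \<le> m" using depth_le u by auto
  moreover have "\<not> depth u < m"
  proof
    assume "depth u < m"
    have "(R, w) \<in> adj E ^^ Suc (depth u)" using depth_path[OF uV] u(2) by auto
    then have "depth w \<le> Suc (depth u)" by (rule depth_le)
    with \<open>depth u < m\<close> m show False by auto
  qed
  ultimately show ?thesis using uV u m by (intro exI[of _ u]) auto
qed

definition par :: "'v \<Rightarrow> 'v" where
  "par w = (SOME u. u \<in> V \<and> Suc (depth u) = depth w \<and> (u, w) \<in> adj E)"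

lemma par: assumes "w \<in> V" "w \<noteq> R"
  shows "par w \<in> V" "Suc (depth (par w)) = depth w" "(par w, w) \<in> adj E"
  using someI_ex[OF par_ex[OF assms]] unfolding par_def by auto

lemma par_neq: "w \<in> V \<Longrightarrow> w \<noteq> R \<Longrightarrow> par w \<noteq> w"
  using par(2) by fastforce

definition ed :: "'v \<Rightarrow> 'v \<times> 'v" where
  "ed w = (if (par w, w) \<in> E then (par w, w) else (w, par w))"

lemma ed_E: "w \<in> V \<Longrightarrow> w \<noteq> R \<Longrightarrow> ed w \<in> E"
  using par(3) unfolding ed_def adj_def by auto

lemma ed_cases: "ed w = (par w, w) \<or> ed w = (w, par w)"
  unfolding ed_def by auto

lemma ed_inj: "inj_on ed (V - {R})"
proof (rule inj_onI)
  fix u w assume u: "u \<in> V - {R}" and w: "w \<in> V - {R}" and eq: "ed u = ed w"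
  have du: "Suc (depth (par u)) = depth u" and dw: "Suc (depth (par w)) = depth w"
    using par u w by auto
  show "u = w"
    using ed_cases[of u] ed_cases[of w] eq du dw by auto
qed

lemma ed_img: "ed ` (V - {R}) = E"
proof -
  have sub: "ed ` (V - {R}) \<subseteq> E" using ed_E by blast
  have "card (ed ` (V - {R})) = card (V - {R})" using card_image[OF ed_inj] .
  also have "\<dots> = card E" using cardE R finV by auto
  finally show ?thesis using card_subset_eq[OF finE sub] by auto
qed

definition num :: "'v \<Rightarrow> nat" where "num = (SOME f. inj_on f V)"

lemma num_inj: "inj_on num V"
proof -
  obtain f :: "'v \<Rightarrow> nat" where "inj_on f V" using finite_imp_inj_to_nat_seg[OF finV] by metis
  then show ?thesis unfolding num_def by (rule someI[where P="\<lambda>f. inj_on f V"])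
qed

definition key :: "'v \<Rightarrow> nat list" where
  "key w = map (\<lambda>i. num ((par ^^ (depth w - 1 - i)) w)) [0..<depth w]"

lemma key_len: "length (key w) = depth w" unfolding key_def by simp

lemma key_R: "key R = []" unfolding key_def using depth_R by simp

lemma key_par: assumes "w \<in> V" "w \<noteq> R" shows "key w = key (par w) @ [num w]"
proof -
  obtain m where m: "depth w = Suc m" "depth (par w) = m" using par(2)[OF assms] by (metis)
  have "key w = map (\<lambda>i. num ((par ^^ (Suc m - 1 - i)) w)) ([0..<m] @ [m])"
    unfolding key_def m by simp
  also have "\<dots> = map (\<lambda>i. num ((par ^^ (m - 1 - i)) (par w))) [0..<m] @ [num w]"
  proof -
    have "(par ^^ (Suc m - 1 - i)) w = (par ^^ (m - 1 - i)) (par w)" if "i < m" for i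
    proof -
      have "Suc m - 1 - i = Suc (m - 1 - i)" using that by auto
      then show ?thesis by (simp add: funpow_Suc_right del: funpow.simps)
    qed
    then show ?thesis by simp
  qed
  also have "\<dots> = key (par w) @ [num w]" unfolding key_def m by simp
  finally show ?thesis .
qed

lemma key_inj: "inj_on key V"
proof (rule inj_onI)
  fix u w assume u: "u \<in> V" and w: "w \<in> V" and eq: "key u = key w"
  show "u = w"
  proof (cases "u = R \<or> w = R")
    case True
    then have "depth u = 0 \<or> depth w = 0" using depth_R by auto
    then have "depth u = 0 \<and> depth w = 0" using key_len eq by metis
    then show ?thesis using depth0 u w by auto
  next
    case False
    then have "num u = num w" using key_par[of u] key_par[of w] u w eq by auto
    then show ?thesis using num_inj u w by (auto dest: inj_onD)
  qed
qed

lemma key_par_less: "w \<in> V \<Longrightarrow> w \<noteq> R \<Longrightarrow> key (par w) < key w"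
  using key_par by (intro strict_prefix_less) (auto simp: strict_prefix_def)

definition ks :: "nat list list" where "ks = sorted_list_of_set (key ` (V - {R}))"
definition ws :: "'v list" where "ws = map (the_inv_into (V - {R}) key) ks"
definition L :: nat where "L = length ws"

lemma key_inj': "inj_on key (V - {R})" using key_inj by (rule inj_on_subset) auto

lemma ks_set: "set ks = key ` (V - {R})" unfolding ks_def using finV by simp
lemma ks_sorted: "sorted_wrt (<) ks" unfolding ks_def by (rule strict_sorted_list_of_set)
lemma L_ks: "L = length ks" unfolding L_def ws_def by simp

lemma ws_nth: "k < L \<Longrightarrow> ws ! k \<in> V - {R} \<and> key (ws ! k) = ks ! k"
proof -
  assume k: "k < L"
  then have "ks ! k \<in> key ` (V - {R})" using ks_set L_ks nth_mem by metis
  then obtain x where x: "x \<in> V - {R}" "ks ! k = key x" by auto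
  have "the_inv_into (V - {R}) key (key x) = x" using the_inv_into_f_f[OF key_inj' x(1)] .
  then show ?thesis unfolding ws_def using k L_ks x by auto
qed

lemma ws_V: "k < L \<Longrightarrow> ws ! k \<in> V" and ws_R: "k < L \<Longrightarrow> ws ! k \<noteq> R"
  using ws_nth by auto

lemma key_mono: "i < j \<Longrightarrow> j < L \<Longrightarrow> key (ws ! i) < key (ws ! j)"
  using ks_sorted ws_nth L_ks by (simp add: sorted_wrt_iff_nth_less)

lemma ws_inj: "i < L \<Longrightarrow> j < L \<Longrightarrow> ws ! i = ws ! j \<Longrightarrow> i = j"
proof (rule ccontr)
  assume a: "i < L" "j < L" "ws ! i = ws ! j" "i \<noteq> j"
  then consider "i < j" | "j < i" by linarith
  then show False using key_mono[of i j] key_mono[of j i] a by cases auto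
qed

lemma idx_less: "i < L \<Longrightarrow> j < L \<Longrightarrow> key (ws ! i) < key (ws ! j) \<Longrightarrow> i < j"
proof (rule ccontr)
  assume "i < L" "j < L" "key (ws ! i) < key (ws ! j)" "\<not> i < j"
  then consider "i = j" | "j < i" by linarith
  then show False
  proof cases
    case 1 then show False using \<open>key (ws ! i) < key (ws ! j)\<close> by simp
  next
    case 2 then show False using key_mono[of j i] \<open>i < L\<close> \<open>key (ws ! i) < key (ws ! j)\<close> by simp
  qed
qed

lemma ws_ex: assumes "u \<in> V" "u \<noteq> R" shows "\<exists>k<L. ws ! k = u"
proof -
  have "key u \<in> set ks" using ks_set assms by auto
  then obtain k where k: "k < L" "ks ! k = key u" using L_ks by (metis in_set_conv_nth)
  then have "key (ws ! k) = key u" using ws_nth by auto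
  then have "ws ! k = u" using key_inj ws_V[OF k(1)] assms(1) by (auto dest: inj_onD)
  then show ?thesis using k by auto
qed

lemma L_card: "L = card E"
proof -
  have "L = card (key ` (V - {R}))" using L_ks unfolding ks_def by simp
  also have "\<dots> = card (V - {R})" by (rule card_image[OF key_inj'])
  also have "\<dots> = card E" using cardE R finV by auto
  finally show ?thesis .
qed

lemma par_before: assumes "k < L" shows "par (ws ! k) = R \<or> (\<exists>k'<k. par (ws ! k) = ws ! k')"
proof (cases "par (ws ! k) = R")
  case False
  have pV: "par (ws ! k) \<in> V" using par ws_V ws_R assms by auto
  obtain k' where k': "k' < L" "ws ! k' = par (ws ! k)" using ws_ex[OF pV False] by auto
  have "key (ws ! k') < key (ws ! k)" using k' key_par_less ws_V ws_R assms by auto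
  then have "k' < k" using idx_less k' assms by auto
  then show ?thesis using k' by auto
qed simp

lemma contig: assumes "k' \<le> k0" "k0 \<le> k" "k < L" "prefix (key (ws ! k')) (key (ws ! k))"
  shows "prefix (key (ws ! k')) (key (ws ! k0))"
proof -
  have "key (ws ! k') \<le> key (ws ! k0)"
    using key_mono[of k' k0] assms by (cases "k' = k0") auto
  moreover have "key (ws ! k0) \<le> key (ws ! k)"
    using key_mono[of k0 k] assms by (cases "k0 = k") auto
  ultimately show ?thesis using prefix_between assms(4) by blast
qed

end

lemma openin_quot: "openin (quotient_topology X f) U \<longleftrightarrow> U \<subseteq> f ` topspace X \<and> openin X {x \<in> topspace X. f x \<in> U}"
  unfolding quotient_topology_def topology_inverse'[OF istopology_quotient] by (rule refl)

lemma topspace_quot: "topspace (quotient_topology X f) = f ` topspace X"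
proof -
  have "{x \<in> topspace X. f x \<in> f ` topspace X} = topspace X" by auto
  then have "openin (quotient_topology X f) (f ` topspace X)"
    unfolding openin_quot by simp
  then have "f ` topspace X \<subseteq> topspace (quotient_topology X f)" by (rule openin_subset)
  moreover have "topspace (quotient_topology X f) \<subseteq> f ` topspace X"
    by (auto simp: topspace_def openin_quot)
  ultimately show ?thesis by (rule subset_antisym[rotated])
qed

lemma closedin_quot: "closedin (quotient_topology X f) C \<longleftrightarrow> C \<subseteq> f ` topspace X \<and> closedin X {x \<in> topspace X. f x \<in> C}"
proof -
  have e: "{x \<in> topspace X. f x \<in> f ` topspace X - C} = topspace X - {x \<in> topspace X. f x \<in> C}" by auto
  show ?thesis unfolding closedin_def topspace_quot openin_quot e by auto
qed

lemma cont_quot: "continuous_map X (quotient_topology X f) f"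
  unfolding continuous_map_def topspace_quot
proof (intro conjI allI impI)
  show "f \<in> topspace X \<rightarrow> f ` topspace X" by auto
  fix U assume "openin (quotient_topology X f) U"
  then show "openin X {x \<in> topspace X. f x \<in> U}" unfolding openin_quot by auto
qed

lemma topspace_edges: "topspace (edges_top E) = E \<times> {0..1}"
  unfolding edges_top_def by auto

lemma cake_eq: "cake E = cpt ` (E \<times> {0..1})"
  unfolding cake_def cake_top_def topspace_quot topspace_edges ..
lemma closedin_cake:
  assumes fin: "finite E" and sub: "C \<subseteq> cake E" and cl: "\<And>e. e \<in> E \<Longrightarrow> closed {r \<in> {0..1}. cpt (e, r) \<in> C}"
  shows "closedin (cake_top E) C"
proof -
  have eq: "{x \<in> topspace (edges_top E). cpt x \<in> C} = (\<Union>e\<in>E. {e} \<times> {r \<in> {0..1}. cpt (e, r) \<in> C})"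
    unfolding topspace_edges by auto
  have "closedin (prod_topology (discrete_topology E) euclideanreal) (\<Union>e\<in>E. {e} \<times> {r \<in> {0..1}. cpt (e, r) \<in> C})"
  proof (rule closedin_Union)
    show "finite ((\<lambda>e. {e} \<times> {r \<in> {0..1}. cpt (e, r) \<in> C}) ` E)" using fin by simp
    fix T assume "T \<in> (\<lambda>e. {e} \<times> {r \<in> {0..1}. cpt (e, r) \<in> C}) ` E"
    then obtain e where e: "e \<in> E" "T = {e} \<times> {r \<in> {0..1}. cpt (e, r) \<in> C}" by auto
    have "closedin euclideanreal {r \<in> {0..1}. cpt (e, r) \<in> C}" unfolding closed_closedin[symmetric] by (rule cl[OF e(1)])
    moreover have "closedin (discrete_topology E) {e}" using e(1) by (simp add: closedin_discrete_topology)
    ultimately show "closedin (prod_topology (discrete_topology E) euclideanreal) T"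
      unfolding e(2) closedin_prod_Times_iff by blast
  qed
  then have "closedin (edges_top E) (\<Union>e\<in>E. {e} \<times> {r \<in> {0..1}. cpt (e, r) \<in> C})"
  proof -
    assume a: "closedin (prod_topology (discrete_topology E) euclideanreal) (\<Union>e\<in>E. {e} \<times> {r \<in> {0..1}. cpt (e, r) \<in> C})"
    have "(\<Union>e\<in>E. {e} \<times> {r \<in> {0..1}. cpt (e, r) \<in> C}) = (\<Union>e\<in>E. {e} \<times> {r \<in> {0..1}. cpt (e, r) \<in> C}) \<inter> (E \<times> {0..1})"
      by auto
    then show ?thesis unfolding edges_top_def closedin_subtopology using a by blast
  qed
  then show ?thesis
    unfolding cake_top_def closedin_quot
  proof (intro conjI)
    show "C \<subseteq> cpt ` topspace (edges_top E)" using sub unfolding cake_eq topspace_edges .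
  qed (simp only: eq)
qed

lemma closedin_sets: "closedin (cake_top E) C \<Longrightarrow> C \<in> sets (cake_borel E)"
proof -
  assume c: "closedin (cake_top E) C"
  let ?O = "topspace (cake_top E)"
  have A: "{U. openin (cake_top E) U} \<subseteq> Pow ?O" using openin_subset by auto
  have "?O - C \<in> {U. openin (cake_top E) U}" using c unfolding closedin_def by auto
  then have "?O - (?O - C) \<in> sigma_sets ?O {U. openin (cake_top E) U}"
    by (intro sigma_sets.Compl sigma_sets.Basic)
  moreover have "?O - (?O - C) = C" using c closedin_subset by auto
  ultimately show ?thesis unfolding cake_borel_def using sets_measure_of[OF A] by auto
qed

lemma card_pc_le:
  assumes "finite T" "\<And>p. p \<in> topspace X \<Longrightarrow> \<exists>q\<in>T. path_component_of X p q"
  shows "card (path_components_of X) \<le> card T"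
proof -
  have "path_components_of X \<subseteq> path_component_of_set X ` T"
  proof
    fix C assume "C \<in> path_components_of X"
    then obtain p where p: "p \<in> topspace X" "C = path_component_of_set X p"
      unfolding path_components_of_def by auto
    then obtain q where "q \<in> T" "path_component_of X p q" using assms(2) by blast
    then have "C = path_component_of_set X q" using p path_component_of_equiv by metis
    then show "C \<in> path_component_of_set X ` T" using \<open>q \<in> T\<close> by auto
  qed
  then have "card (path_components_of X) \<le> card (path_component_of_set X ` T)"
    using assms(1) by (intro card_mono) auto
  also have "\<dots> \<le> card T" using assms(1) by (rule card_image_le)
  finally show ?thesis .
qed

context rtree begin

definition edk :: "nat \<Rightarrow> 'v \<times> 'v" where "edk k = ed (ws ! k)"
definition fl :: "nat \<Rightarrow> bool" where "fl k = (fst (edk k) = ws ! k)"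
definition orient :: "nat \<Rightarrow> real \<Rightarrow> real" where "orient k r = (if fl k then 1 - r else r)"
definition Pt :: "nat \<Rightarrow> real \<Rightarrow> 'v cake_pt" where "Pt k s = cpt (edk k, orient k (s - real k))"
definition seg :: "nat \<Rightarrow> real \<Rightarrow> real \<Rightarrow> 'v cake_pt set" where "seg k a b = Pt k ` {a..b}"
definition Arc :: "real \<Rightarrow> real \<Rightarrow> 'v cake_pt set" where
  "Arc a b = (\<Union>k\<in>{k. k < L \<and> max a (real k) < min b (real k + 1)}. seg k (max a (real k)) (min b (real k + 1)))"
definition idx :: "'v \<times> 'v \<Rightarrow> nat" where "idx e = (THE k. k < L \<and> edk k = e)"
definition Phi :: "'v cake_pt \<Rightarrow> real" where
  "Phi p = (case p of Vtx w \<Rightarrow> -1 - real (num w) | Mid e r \<Rightarrow> real (idx e) + orient (idx e) r)"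
definition VX :: "'v cake_pt set" where "VX = Vtx ` V"

lemma edk_cases: "k < L \<Longrightarrow> (\<not> fl k \<and> edk k = (par (ws ! k), ws ! k)) \<or> (fl k \<and> edk k = (ws ! k, par (ws ! k)))"
  using ed_cases[of "ws ! k"] par_neq[OF ws_V ws_R] unfolding fl_def edk_def by auto

lemma edk_E: "k < L \<Longrightarrow> edk k \<in> E" unfolding edk_def using ed_E ws_V ws_R by auto

lemma edk_inj: "i < L \<Longrightarrow> j < L \<Longrightarrow> edk i = edk j \<Longrightarrow> i = j"
  unfolding edk_def using ed_inj ws_V ws_R ws_inj by (metis DiffI inj_onD singletonD)

lemma edk_ex: "e \<in> E \<Longrightarrow> \<exists>k<L. edk k = e"
proof -
  assume "e \<in> E"
  then obtain w where w: "w \<in> V - {R}" "e = ed w" using ed_img by auto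
  then obtain k where "k < L" "ws ! k = w" using ws_ex by auto
  then show ?thesis using w unfolding edk_def by auto
qed

lemma idx: "e \<in> E \<Longrightarrow> idx e < L \<and> edk (idx e) = e"
proof -
  assume "e \<in> E"
  then obtain k where k: "k < L" "edk k = e" using edk_ex by blast
  have "(THE k. k < L \<and> edk k = e) = k" using k edk_inj by (intro the_equality) auto
  then show ?thesis using k unfolding idx_def by auto
qed

lemma idx_edk: "k < L \<Longrightarrow> idx (edk k) = k"
  using idx[OF edk_E] edk_inj by auto

lemma orient_inv [simp]: "orient k (orient k r) = r" unfolding orient_def by auto

lemma Pt_par: "k < L \<Longrightarrow> Pt k (real k) = Vtx (par (ws ! k))"
  using edk_cases[of k] unfolding Pt_def orient_def cpt_def by auto

lemma Pt_child: "k < L \<Longrightarrow> Pt k (real k + 1) = Vtx (ws ! k)"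
  using edk_cases[of k] unfolding Pt_def orient_def cpt_def by auto

lemma Pt_mid: "k < L \<Longrightarrow> real k < s \<Longrightarrow> s < real k + 1 \<Longrightarrow> Pt k s = Mid (edk k) (orient k (s - real k))"
  unfolding Pt_def orient_def cpt_def by auto

lemma Pt_cake: "k < L \<Longrightarrow> real k \<le> s \<Longrightarrow> s \<le> real k + 1 \<Longrightarrow> Pt k s \<in> cake E"
  unfolding cake_eq Pt_def using edk_E by (auto simp: orient_def)

lemma cake_Pt: "p \<in> cake E \<Longrightarrow> \<exists>k<L. \<exists>s. real k \<le> s \<and> s \<le> real k + 1 \<and> p = Pt k s"
proof -
  assume "p \<in> cake E"
  then obtain e r where er: "e \<in> E" "0 \<le> r" "r \<le> 1" "p = cpt (e, r)" unfolding cake_eq by auto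
  define k where "k = idx e"
  have k: "k < L" "edk k = e" using idx[OF er(1)] unfolding k_def by auto
  have "p = Pt k (real k + orient k r)" unfolding Pt_def using k er by simp
  moreover have "real k \<le> real k + orient k r" "real k + orient k r \<le> real k + 1"
    using er unfolding orient_def by auto
  ultimately show ?thesis using k by blast
qed

lemma Phi_Pt: "k < L \<Longrightarrow> real k < s \<Longrightarrow> s < real k + 1 \<Longrightarrow> Phi (Pt k s) = s"
  using Pt_mid[of k s] idx_edk[of k] unfolding Phi_def by simp

lemma Pt_vx: "k < L \<Longrightarrow> Pt k (real k) \<in> VX" "k < L \<Longrightarrow> Pt k (real k + 1) \<in> VX"
  using Pt_par Pt_child par ws_V ws_R unfolding VX_def by auto

lemma mid_cake: "p \<in> cake E \<Longrightarrow> p \<notin> VX \<Longrightarrow> \<exists>k<L. \<exists>s. real k < s \<and> s < real k + 1 \<and> p = Pt k s"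
proof -
  assume p: "p \<in> cake E" "p \<notin> VX"
  then obtain k s where ks: "k < L" "real k \<le> s" "s \<le> real k + 1" "p = Pt k s" using cake_Pt by blast
  have "s \<noteq> real k" "s \<noteq> real k + 1" using Pt_vx[OF ks(1)] ks(4) p(2) by auto
  then have "real k < s" "s < real k + 1" using ks by auto
  then show ?thesis using ks by blast
qed

lemma Phi_mid_bounds: "p \<in> cake E \<Longrightarrow> p \<notin> VX \<Longrightarrow> 0 < Phi p \<and> Phi p < real L"
proof -
  assume "p \<in> cake E" "p \<notin> VX"
  then obtain k s where k: "k < L" "real k < s" "s < real k + 1" "p = Pt k s" using mid_cake by blast
  have "Suc k \<le> L" using k(1) by simp
  then have "real (Suc k) \<le> real L" by (simp only: of_nat_le_iff)
  then have "real k + 1 \<le> real L" by simp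
  moreover have "Phi p = s" using Phi_Pt k by simp
  moreover have "0 \<le> real k" by simp
  ultimately show ?thesis using k by linarith
qed

lemma vx_cake: "p \<in> cake E \<Longrightarrow> p \<in> VX \<Longrightarrow> \<exists>w\<in>V. p = Vtx w \<and> Phi p = -1 - real (num w)"
  unfolding VX_def Phi_def by auto

lemma Phi_inj: "inj_on Phi (cake E)"
proof (rule inj_onI)
  fix p q assume p: "p \<in> cake E" and q: "q \<in> cake E" and eq: "Phi p = Phi q"
  show "p = q"
  proof (cases "p \<in> VX"; cases "q \<in> VX")
    assume "p \<in> VX" "q \<in> VX"
    then obtain u w where uw: "u \<in> V" "w \<in> V" "p = Vtx u" "q = Vtx w" "Phi p = -1 - real (num u)" "Phi q = -1 - real (num w)"
      using vx_cake p q by metis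
    then have "num u = num w" using eq by simp
    then show ?thesis using num_inj uw by (auto dest: inj_onD)
  next
    assume "p \<in> VX" "q \<notin> VX"
    then obtain u where "Phi p = -1 - real (num u)" using vx_cake[OF p] by metis
    then show ?thesis using Phi_mid_bounds[OF q \<open>q \<notin> VX\<close>] eq by simp
  next
    assume "p \<notin> VX" "q \<in> VX"
    then obtain u where "Phi q = -1 - real (num u)" using vx_cake[OF q] by metis
    then show ?thesis using Phi_mid_bounds[OF p \<open>p \<notin> VX\<close>] eq by simp
  next
    assume "p \<notin> VX" "q \<notin> VX"
    then obtain k s k' s' where a: "k < L" "real k < s" "s < real k + 1" "p = Pt k s"
      and b: "k' < L" "real k' < s'" "s' < real k' + 1" "q = Pt k' s'"
      using mid_cake p q by metis
    have ss: "s = s'" using Phi_Pt a b eq by auto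
    have kk: "k = k'"
    proof -
      have "real k < real k' + 1" "real k' < real k + 1" using a b ss by auto
      then show ?thesis by linarith
    qed
    show ?thesis using a(4) b(4) ss kk by simp
  qed
qed

lemma finite_VX: "finite VX" unfolding VX_def using finV by auto

lemma Arc_sub: "Arc a b \<subseteq> cake E"
  unfolding Arc_def seg_def using Pt_cake by auto

lemma Arc_in: "k < L \<Longrightarrow> real k \<le> s \<Longrightarrow> s \<le> real k + 1 \<Longrightarrow> a \<le> s \<Longrightarrow> s \<le> b \<Longrightarrow> max a (real k) < min b (real k + 1)
   \<Longrightarrow> Pt k s \<in> Arc a b"
  unfolding Arc_def seg_def by auto

lemma Arc_mid: assumes "p \<in> cake E" "p \<notin> VX"
  shows "p \<in> Arc a b \<longleftrightarrow> a \<le> Phi p \<and> Phi p \<le> b \<and> a < b"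
proof
  assume "p \<in> Arc a b"
  then obtain k s where k: "k < L" "max a (real k) < min b (real k + 1)" "max a (real k) \<le> s" "s \<le> min b (real k + 1)" "p = Pt k s"
    unfolding Arc_def seg_def by auto
  have "s \<noteq> real k" "s \<noteq> real k + 1" using Pt_vx[OF k(1)] k(5) assms(2) by auto
  then have "Phi p = s" using Phi_Pt k by auto
  then show "a \<le> Phi p \<and> Phi p \<le> b \<and> a < b" using k by auto
next
  assume ab: "a \<le> Phi p \<and> Phi p \<le> b \<and> a < b"
  obtain k s where k: "k < L" "real k < s" "s < real k + 1" "p = Pt k s" using mid_cake assms by blast
  then have "Phi p = s" using Phi_Pt by auto
  then show "p \<in> Arc a b" using k ab by (intro Arc_in[of k s a b, simplified k(4)[symmetric]]) auto
qed

lemma Arc_empty: "b \<le> a \<Longrightarrow> Arc a b = {}"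
  unfolding Arc_def by auto

end

lemma nat_real_lt: "(k'::nat) < k \<Longrightarrow> real k' + 1 \<le> real k"
proof -
  assume "k' < k"
  then have "Suc k' \<le> k" by simp
  then have "real (Suc k') \<le> real k" by (simp only: of_nat_le_iff)
  then show ?thesis by simp
qed

lemma nat_real_less: "real (k'::nat) < real k \<longleftrightarrow> k' < k" by simp

context rtree begin

lemma topspace_cake_sub: "S \<subseteq> cake E \<Longrightarrow> topspace (subtopology (cake_top E) S) = S"
  unfolding topspace_subtopology cake_def by auto

lemma cont_gamma:
  assumes k: "k < L" and s: "real k \<le> s1" "s1 \<le> s2" "s2 \<le> real k + 1"
  shows "continuous_map (top_of_set {0..1}) (edges_top E) (\<lambda>\<tau>. (edk k, orient k (s1 + \<tau> * (s2 - s1) - real k)))"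
proof -
  have range: "orient k (s1 + \<tau> * (s2 - s1) - real k) \<in> {0..1}" if "\<tau> \<in> {0..1}" for \<tau>
  proof -
    have "0 \<le> \<tau> * (s2 - s1)" using that s by auto
    moreover have "\<tau> * (s2 - s1) \<le> s2 - s1" using that s by (intro mult_left_le_one_le) auto
    ultimately show ?thesis using s unfolding orient_def by auto
  qed
  have c2: "continuous_on {0..1} (\<lambda>\<tau>. orient k (s1 + \<tau> * (s2 - s1) - real k))"
    unfolding orient_def by (cases "fl k") (auto intro!: continuous_intros)
  show ?thesis
    unfolding edges_top_def continuous_map_in_subtopology continuous_map_pairwise
    using c2 range edk_E[OF k] by (auto simp: o_def)
qed

lemma path_seg:
  assumes k: "k < L" and s: "real k \<le> s1" "s1 \<le> s2" "s2 \<le> real k + 1" and S: "seg k s1 s2 \<subseteq> S"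
  shows "path_component_of (subtopology (cake_top E) S) (Pt k s1) (Pt k s2)"
proof -
  define g where "g \<tau> = Pt k (s1 + \<tau> * (s2 - s1))" for \<tau>
  have "g = cpt \<circ> (\<lambda>\<tau>. (edk k, orient k (s1 + \<tau> * (s2 - s1) - real k)))"
    unfolding g_def Pt_def by (auto simp: o_def)
  then have gc: "continuous_map (top_of_set {0..1}) (cake_top E) g"
    unfolding cake_top_def using continuous_map_compose[OF cont_gamma[OF k s] cont_quot] by simp
  have gS: "g \<tau> \<in> S" if "\<tau> \<in> {0..1}" for \<tau>
  proof -
    have "0 \<le> \<tau> * (s2 - s1)" using that s by auto
    moreover have "\<tau> * (s2 - s1) \<le> s2 - s1" using that s by (intro mult_left_le_one_le) auto
    ultimately have "s1 + \<tau> * (s2 - s1) \<in> {s1..s2}" by auto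
    then show ?thesis using S unfolding g_def seg_def by auto
  qed
  have "pathin (subtopology (cake_top E) S) g"
    unfolding pathin_def continuous_map_in_subtopology using gc gS by auto
  moreover have "g 0 = Pt k s1" "g 1 = Pt k s2" unfolding g_def by auto
  ultimately show ?thesis unfolding path_component_of_def by blast
qed

lemma Arc_seg: "k < L \<Longrightarrow> max a (real k) < min b (real k + 1) \<Longrightarrow> seg k (max a (real k)) (min b (real k + 1)) \<subseteq> Arc a b"
  unfolding Arc_def by auto

lemma Arc_E: assumes "p \<in> Arc a b"
  obtains k s where "k < L" "max a (real k) < min b (real k + 1)" "max a (real k) \<le> s" "s \<le> min b (real k + 1)" "p = Pt k s"
  using assms unfolding Arc_def seg_def by auto

lemma seg_mono: "a' \<le> a \<Longrightarrow> b \<le> b' \<Longrightarrow> seg k a b \<subseteq> seg k a' b'"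
  unfolding seg_def by auto

lemma prefix_conn: "k < L \<Longrightarrow> real k < x \<Longrightarrow>
   path_component_of (subtopology (cake_top E) (Arc 0 x)) (Vtx (par (ws ! k))) (Vtx R)"
proof (induction k rule: less_induct)
  case (less k)
  let ?X = "subtopology (cake_top E) (Arc 0 x)"
  have top: "topspace ?X = Arc 0 x" using topspace_cake_sub[OF Arc_sub] .
  have inA: "Pt k (real k) \<in> Arc 0 x" using less.prems by (intro Arc_in) auto
  show ?case
  proof (cases "par (ws ! k) = R")
    case True
    then show ?thesis using inA Pt_par[OF less.prems(1)] top by (simp add: path_component_of_refl)
  next
    case False
    then obtain k' where k': "k' < k" "par (ws ! k) = ws ! k'" using par_before[OF less.prems(1)] by auto
    have k'L: "k' < L" using k' less.prems by auto
    have r: "real k' + 1 \<le> real k" using nat_real_lt[OF k'(1)] .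
    have IH: "path_component_of ?X (Vtx (par (ws ! k'))) (Vtx R)"
      using less.IH[OF k'(1) k'L] less.prems r by auto
    have "seg k' (max 0 (real k')) (min x (real k' + 1)) \<subseteq> Arc 0 x"
      using less.prems r k'L by (intro Arc_seg) auto
    moreover have "max 0 (real k') = real k'" "min x (real k' + 1) = real k' + 1" using less.prems r by auto
    ultimately have "seg k' (real k') (real k' + 1) \<subseteq> Arc 0 x" by simp
    then have "path_component_of ?X (Pt k' (real k')) (Pt k' (real k' + 1))"
      using k'L by (intro path_seg) auto
    then have "path_component_of ?X (Vtx (par (ws ! k))) (Vtx (par (ws ! k')))"
      using Pt_par[OF k'L] Pt_child[OF k'L] k'(2) by (simp add: path_component_of_sym)
    then show ?thesis using IH by (rule path_component_of_trans)
  qed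
qed

lemma prefix_all: "p \<in> Arc 0 x \<Longrightarrow> path_component_of (subtopology (cake_top E) (Arc 0 x)) p (Vtx R)"
proof -
  assume "p \<in> Arc 0 x"
  then obtain k s where k: "k < L" "max 0 (real k) < min x (real k + 1)" "max 0 (real k) \<le> s"
     "s \<le> min x (real k + 1)" "p = Pt k s"
    by (rule Arc_E)
  have kx: "real k < x" using k by auto
  have mk: "max 0 (real k) = real k" by simp
  have "seg k (real k) s \<subseteq> seg k (max 0 (real k)) (min x (real k + 1))"
    using k(4) mk by (intro seg_mono) auto
  then have "seg k (real k) s \<subseteq> Arc 0 x"
    using Arc_seg[OF k(1,2)] by (rule order.trans)
  moreover have "real k \<le> s" "s \<le> real k + 1" using k(3,4) mk by auto
  ultimately have "path_component_of (subtopology (cake_top E) (Arc 0 x)) (Pt k (real k)) (Pt k s)"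
    using k(1) by (intro path_seg) auto
  then have "path_component_of (subtopology (cake_top E) (Arc 0 x)) (Pt k (real k)) p"
    using k(5) by simp
  then have "path_component_of (subtopology (cake_top E) (Arc 0 x)) p (Vtx (par (ws ! k)))"
    using Pt_par[OF k(1)] by (simp add: path_component_of_sym)
  then show ?thesis using prefix_conn[OF k(1) kx] by (rule path_component_of_trans)
qed


lemma card_Tset: "card (Vtx ` {u \<in> V. prefix (key u) (key w)}) \<le> Suc (depth w)"
proof -
  let ?U = "{u \<in> V. prefix (key u) (key w)}"
  have "card (Vtx ` ?U) \<le> card ?U" using finV by (intro card_image_le) auto
  also have "card ?U = card (key ` ?U)" using key_inj by (intro card_image[symmetric]) (auto intro: inj_on_subset)
  also have "\<dots> \<le> card (set (prefixes (key w)))" by (intro card_mono) (auto simp: in_set_prefixes)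
  also have "\<dots> = Suc (depth w)" by (simp add: card_set_prefixes key_len)
  finally show ?thesis .
qed

lemma arc_conn:
  assumes a0: "0 \<le> a" and ab: "a < b" and bL: "b \<le> real L"
  shows "\<exists>T. finite T \<and> (\<forall>p\<in>Arc a b. \<exists>q\<in>T. path_component_of (subtopology (cake_top E) (Arc a b)) p q)
     \<and> (card T \<le> 1 \<or> (Vtx R \<in> T \<and> (\<exists>w\<in>V. card T \<le> Suc (depth w))))"
proof -
  let ?X = "subtopology (cake_top E) (Arc a b)"
  have top: "topspace ?X = Arc a b" using topspace_cake_sub[OF Arc_sub] .
  define k0 where "k0 = nat \<lfloor>a\<rfloor>"
  have rk0: "real k0 = of_int \<lfloor>a\<rfloor>" unfolding k0_def using a0 by simp
  have k0a: "real k0 \<le> a" "a < real k0 + 1" unfolding rk0 by linarith+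
  have k0L: "k0 < L"
  proof -
    have "real k0 < real L" using k0a ab bL by linarith
    then show ?thesis by simp
  qed
  show ?thesis
  proof (cases "b \<le> real k0 + 1")
    case True
    have "\<forall>p\<in>Arc a b. \<exists>q\<in>{Pt k0 a}. path_component_of ?X p q"
    proof
      fix p assume "p \<in> Arc a b"
      then obtain k s where k: "k < L" "max a (real k) < min b (real k + 1)" "max a (real k) \<le> s"
        "s \<le> min b (real k + 1)" "p = Pt k s" by (rule Arc_E)
      have "k = k0"
      proof (rule ccontr)
        assume "k \<noteq> k0"
        then consider "k < k0" | "k0 < k" by linarith
        then show False
        proof cases
          case 1 then show False using nat_real_lt[OF 1] k(2) k0a by auto
        next
          case 2 then show False using nat_real_lt[OF 2] k(2) True by auto
        qed
      qed
      then have mm: "max a (real k) = a" "min b (real k + 1) = b" using k0a True by auto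
      have "seg k0 a s \<subseteq> Arc a b"
        using Arc_seg[OF k(1,2)] seg_mono[of a a s b k0] k(4) mm \<open>k = k0\<close> by auto
      then have "path_component_of ?X (Pt k0 a) (Pt k0 s)"
        using k(3,4) mm \<open>k = k0\<close> k0a True k0L by (intro path_seg) auto
      then have "path_component_of ?X p (Pt k0 a)" using k(5) \<open>k = k0\<close> by (simp add: path_component_of_sym)
      then show "\<exists>q\<in>{Pt k0 a}. path_component_of ?X p q" by blast
    qed
    then show ?thesis by (intro exI[of _ "{Pt k0 a}"]) auto
  next
    case False
    then have bk0: "real k0 + 1 < b" by simp
    define T where "T = Vtx ` {u \<in> V. prefix (key u) (key (ws ! k0))}"
    have finT: "finite T" unfolding T_def using finV by auto
    have RT: "Vtx R \<in> T" unfolding T_def using R key_R by auto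
    have cT: "card T \<le> Suc (depth (ws ! k0))" unfolding T_def by (rule card_Tset)
    have full: "seg k' (real k') (real k' + 1) \<subseteq> Arc a b" if "k0 < k'" "k' < L" "real k' + 1 \<le> b" for k'
    proof -
      have r: "real k0 + 1 \<le> real k'" using nat_real_lt[OF that(1)] .
      have "max a (real k') = real k'" "min b (real k' + 1) = real k' + 1" using r that k0a by auto
      moreover have "max a (real k') < min b (real k' + 1)" using r that k0a by auto
      ultimately show ?thesis using Arc_seg[OF that(2)] by metis
    qed
    have claimA: "k0 < k \<longrightarrow> k < L \<longrightarrow> real k < b \<longrightarrow> (\<exists>q\<in>T. path_component_of ?X (Vtx (par (ws ! k))) q)" for k
    proof (induction k rule: less_induct)
      case (less k)
      show ?case
      proof (intro impI)
        assume kk: "k0 < k" "k < L" "real k < b"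
        have r: "real k0 + 1 \<le> real k" using nat_real_lt[OF kk(1)] .
        have inA: "Vtx (par (ws ! k)) \<in> Arc a b"
          using Pt_par[OF kk(2)] Arc_in[of k "real k" a b] kk r k0a by auto
        then have refl: "path_component_of ?X (Vtx (par (ws ! k))) (Vtx (par (ws ! k)))"
          using top by (simp add: path_component_of_refl)
        show "\<exists>q\<in>T. path_component_of ?X (Vtx (par (ws ! k))) q"
        proof (cases "par (ws ! k) = R")
          case True then show ?thesis using refl RT by auto
        next
          case False
          then obtain k' where k': "k' < k" "par (ws ! k) = ws ! k'" using par_before[OF kk(2)] by auto
          have k'L: "k' < L" using k' kk by auto
          have pre: "prefix (key (ws ! k')) (key (ws ! k))"
            using key_par[OF ws_V[OF kk(2)] ws_R[OF kk(2)]] k'(2) by auto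
          show ?thesis
          proof (cases "k' \<le> k0")
            case True
            have "prefix (key (ws ! k')) (key (ws ! k0))"
              using contig[OF True _ kk(2) pre] kk(1) by auto
            then have "Vtx (par (ws ! k)) \<in> T" unfolding T_def using k'(2) ws_V[OF k'L] by auto
            then show ?thesis using refl by auto
          next
            case False
            then have "k0 < k'" by simp
            have r': "real k' + 1 \<le> real k" using nat_real_lt[OF k'(1)] .
            obtain q where q: "q \<in> T" "path_component_of ?X (Vtx (par (ws ! k'))) q"
              using less.IH[OF k'(1)] \<open>k0 < k'\<close> k'L r' kk by auto
            have "seg k' (real k') (real k' + 1) \<subseteq> Arc a b" using full[OF \<open>k0 < k'\<close> k'L] r' kk by auto
            then have "path_component_of ?X (Pt k' (real k')) (Pt k' (real k' + 1))"
              using k'L by (intro path_seg) auto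
            then have "path_component_of ?X (Vtx (par (ws ! k))) (Vtx (par (ws ! k')))"
              using Pt_par[OF k'L] Pt_child[OF k'L] k'(2) by (simp add: path_component_of_sym)
            then have "path_component_of ?X (Vtx (par (ws ! k))) q" using q(2) by (rule path_component_of_trans)
            then show ?thesis using q(1) by auto
          qed
        qed
      qed
    qed
    have "\<forall>p\<in>Arc a b. \<exists>q\<in>T. path_component_of ?X p q"
    proof
      fix p assume "p \<in> Arc a b"
      then obtain k s where k: "k < L" "max a (real k) < min b (real k + 1)" "max a (real k) \<le> s"
        "s \<le> min b (real k + 1)" "p = Pt k s" by (rule Arc_E)
      have "\<not> k < k0"
      proof
        assume "k < k0"
        then show False using nat_real_lt[of k k0] k(2) k0a by auto
      qed
      then consider "k = k0" | "k0 < k" by linarith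
      then show "\<exists>q\<in>T. path_component_of ?X p q"
      proof cases
        case 1
        have mm: "max a (real k) = a" "min b (real k + 1) = real k + 1" using 1 k0a bk0 by auto
        have "seg k s (real k + 1) \<subseteq> Arc a b"
          using Arc_seg[OF k(1,2)] seg_mono[of a s "real k + 1" "real k + 1" k] k(3) mm by auto
        then have "path_component_of ?X (Pt k s) (Pt k (real k + 1))"
          using k(3,4) mm 1 k0a k(1) by (intro path_seg) auto
        moreover have "Pt k (real k + 1) \<in> T"
          unfolding T_def using Pt_child[OF k(1)] 1 ws_V[OF k(1)] by auto
        ultimately show ?thesis using k(5) by auto
      next
        case 2
        have r: "real k0 + 1 \<le> real k" using nat_real_lt[OF 2] .
        have mm: "max a (real k) = real k" using r k0a by auto
        have kb: "real k < b" using k(2) mm by auto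
        have "seg k (real k) s \<subseteq> Arc a b"
          using Arc_seg[OF k(1,2)] seg_mono[of "real k" "real k" s "min b (real k + 1)" k] k(4) mm by auto
        then have "path_component_of ?X (Pt k (real k)) (Pt k s)"
          using k(3,4) mm k(1) by (intro path_seg) auto
        then have "path_component_of ?X p (Vtx (par (ws ! k)))"
          using k(5) Pt_par[OF k(1)] by (simp add: path_component_of_sym)
        moreover obtain q where "q \<in> T" "path_component_of ?X (Vtx (par (ws ! k))) q"
          using claimA[of k] 2 k(1) kb by auto
        ultimately show ?thesis using path_component_of_trans by (metis)
      qed
    qed
    then show ?thesis using finT RT cT ws_V[OF k0L] by (intro exI[of _ T]) auto
  qed
qed

end

lemma piece_union: "piece_desc E P \<Longrightarrow> piece_desc E Q \<Longrightarrow>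
   piece_desc E (P \<union> Q) \<and> piece_set (P \<union> Q) = piece_set P \<union> piece_set Q"
  unfolding piece_desc_def piece_set_def by auto

context rtree begin

definition lo :: "nat \<Rightarrow> real \<Rightarrow> real \<Rightarrow> real" where
  "lo k a b = (if fl k then 1 - (b - real k) else a - real k)"
definition hi :: "nat \<Rightarrow> real \<Rightarrow> real \<Rightarrow> real" where
  "hi k a b = (if fl k then 1 - (a - real k) else b - real k)"

lemma seg_piece:
  assumes "real k \<le> a" "a < b" "b \<le> real k + 1"
  shows "seg k a b = cpt ` ({edk k} \<times> {lo k a b..hi k a b})"
proof
  show "seg k a b \<subseteq> cpt ` ({edk k} \<times> {lo k a b..hi k a b})"
  proof
    fix p assume "p \<in> seg k a b"
    then obtain s where s: "a \<le> s" "s \<le> b" "p = Pt k s" unfolding seg_def by auto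
    have "orient k (s - real k) \<in> {lo k a b..hi k a b}"
      using s unfolding lo_def hi_def orient_def by auto
    then show "p \<in> cpt ` ({edk k} \<times> {lo k a b..hi k a b})" using s(3) unfolding Pt_def by auto
  qed
next
  show "cpt ` ({edk k} \<times> {lo k a b..hi k a b}) \<subseteq> seg k a b"
  proof
    fix p assume "p \<in> cpt ` ({edk k} \<times> {lo k a b..hi k a b})"
    then obtain r where r: "lo k a b \<le> r" "r \<le> hi k a b" "p = cpt (edk k, r)" by auto
    have "real k + orient k r \<in> {a..b}" using r(1,2) unfolding lo_def hi_def orient_def by (auto split: if_splits)
    moreover have "Pt k (real k + orient k r) = p" unfolding Pt_def using r(3) by simp
    ultimately show "p \<in> seg k a b" unfolding seg_def by force
  qed
qed

definition PD :: "real \<Rightarrow> real \<Rightarrow> (('v \<times> 'v) \<times> real \<times> real) set" where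
  "PD a b = (\<lambda>k. (edk k, lo k (max a (real k)) (min b (real k + 1)), hi k (max a (real k)) (min b (real k + 1))))
      ` {k. k < L \<and> max a (real k) < min b (real k + 1)}"

lemma Arc_piece: "piece_desc E (PD a b) \<and> piece_set (PD a b) = Arc a b"
proof
  show "piece_desc E (PD a b)"
    unfolding piece_desc_def PD_def using edk_E by (auto simp: lo_def hi_def)
  have "piece_set (PD a b) = (\<Union>k\<in>{k. k < L \<and> max a (real k) < min b (real k + 1)}.
      cpt ` ({edk k} \<times> {lo k (max a (real k)) (min b (real k + 1))..hi k (max a (real k)) (min b (real k + 1))}))"
    unfolding piece_set_def PD_def by auto
  also have "\<dots> = Arc a b" unfolding Arc_def
    by (intro SUP_cong refl seg_piece[symmetric]) auto
  finally show "piece_set (PD a b) = Arc a b" .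
qed

lemma is_piece_Arc: "is_piece E (Arc a b)"
  unfolding is_piece_def using Arc_piece by metis

lemma is_piece_Arc2: "is_piece E (Arc a b \<union> Arc c d)"
  unfolding is_piece_def using Arc_piece[of a b] Arc_piece[of c d] piece_union by metis

lemma real_k_L: "k < L \<Longrightarrow> real k + 1 \<le> real L" using nat_real_lt by blast

lemma cover:
  assumes "0 \<le> x" "x \<le> y" "y \<le> real L"
  shows "cake E = Arc 0 x \<union> Arc x y \<union> Arc y (real L)"
proof
  show "Arc 0 x \<union> Arc x y \<union> Arc y (real L) \<subseteq> cake E" using Arc_sub by auto
  show "cake E \<subseteq> Arc 0 x \<union> Arc x y \<union> Arc y (real L)"
  proof
    fix p assume "p \<in> cake E"
    then obtain k s where k: "k < L" "real k \<le> s" "s \<le> real k + 1" "p = Pt k s" using cake_Pt by blast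
    have kL: "real k + 1 \<le> real L" using real_k_L[OF k(1)] .
    have k0: "0 \<le> real k" by simp
    consider "s \<le> x" "real k < x" | "x \<le> s" "s \<le> y" "max x (real k) < min y (real k + 1)"
      | "y \<le> s" "y < real k + 1"
    proof -
      assume c1: "s \<le> x \<Longrightarrow> real k < x \<Longrightarrow> thesis"
        and c2: "x \<le> s \<Longrightarrow> s \<le> y \<Longrightarrow> max x (real k) < min y (real k + 1) \<Longrightarrow> thesis"
        and c3: "y \<le> s \<Longrightarrow> y < real k + 1 \<Longrightarrow> thesis"
      show thesis
      proof (cases "s \<le> x")
        case True
        show thesis
        proof (cases "real k < x")
          case True then show thesis using c1 \<open>s \<le> x\<close> by blast
        next
          case False
          then have "s = real k" "x = real k" using True k assms by auto
          show thesis
          proof (cases "real k < y")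
            case True
            then have "max x (real k) < min y (real k + 1)" using \<open>x = real k\<close> by simp
            then show thesis using c2 \<open>s = real k\<close> \<open>x = real k\<close> True by auto
          next
            case False
            then show thesis using c3 \<open>s = real k\<close> assms \<open>x = real k\<close> by auto
          qed
        qed
      next
        case False
        show thesis
        proof (cases "s \<le> y")
          case True
          show thesis
          proof (cases "real k < y")
            case True
            then have "max x (real k) < min y (real k + 1)" using \<open>\<not> s \<le> x\<close> \<open>s \<le> y\<close> k by (simp add: max_def min_def)
            then show thesis using c2 \<open>s \<le> y\<close> \<open>\<not> s \<le> x\<close> by auto
          next
            case False
            then show thesis using c3 \<open>s \<le> y\<close> k by auto
          qed
        next
          case False
          then show thesis using c3 k by auto
        qed
      qed
    qed
    then show "p \<in> Arc 0 x \<union> Arc x y \<union> Arc y (real L)"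
    proof cases
      case 1
      then have "Pt k s \<in> Arc 0 x" using k k0 by (intro Arc_in) auto
      then show ?thesis using k(4) by simp
    next
      case 2
      then have "Pt k s \<in> Arc x y" using k by (intro Arc_in) auto
      then show ?thesis using k(4) by simp
    next
      case 3
      then have "Pt k s \<in> Arc y (real L)" using k kL by (intro Arc_in) auto
      then show ?thesis using k(4) by simp
    qed
  qed
qed

lemma inter_finite:
  assumes "0 \<le> x" "x \<le> y" "y \<le> real L"
  shows "finite (Arc x y \<inter> (Arc 0 x \<union> Arc y (real L)))"
proof -
  have "Arc x y \<inter> (Arc 0 x \<union> Arc y (real L)) \<subseteq> VX \<union> (Phi -` {x, y} \<inter> cake E)"
  proof
    fix p assume p: "p \<in> Arc x y \<inter> (Arc 0 x \<union> Arc y (real L))"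
    then have pc: "p \<in> cake E" using Arc_sub by auto
    show "p \<in> VX \<union> (Phi -` {x, y} \<inter> cake E)"
    proof (cases "p \<in> VX")
      case False
      then have "Phi p = x \<or> Phi p = y" using p Arc_mid[OF pc False] by auto
      then show ?thesis using pc by auto
    qed simp
  qed
  moreover have "finite (VX \<union> (Phi -` {x, y} \<inter> cake E))"
    using finite_VX finite_vimage_IntI[OF _ Phi_inj, of "{x,y}"] by auto
  ultimately show ?thesis by (rule finite_subset)
qed

end

locale rtree_v = rtree V E R for V :: "'v set" and E R +
  fixes v :: "'v cake_pt measure"
  assumes val: "valuation E v"
begin

lemma sp: "space v = cake E" and sv: "sets v = sets (cake_borel E)" and ps: "prob_space v"
  and atom: "\<And>x. x \<in> cake E \<Longrightarrow> emeasure v {x} = 0"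
  using val unfolding valuation_def by auto

interpretation P: prob_space v by (rule ps)

lemma Phi_le_closed: "closedin (cake_top E) {w \<in> cake E. Phi w \<le> z}"
proof (rule closedin_cake[OF finE])
  show "{w \<in> cake E. Phi w \<le> z} \<subseteq> cake E" by auto
  fix e assume e: "e \<in> E"
  define k where "k = idx e"
  have k: "k < L" "edk k = e" using idx[OF e] unfolding k_def by auto
  have Phi_cpt: "Phi (cpt (e, r)) = (if r = 0 then -1 - real (num (fst e)) else if r = 1 then -1 - real (num (snd e))
      else real k + orient k r)" for r
    unfolding cpt_def Phi_def k_def by auto
  have incake: "cpt (e, r) \<in> cake E" if "r \<in> {0..1}" for r
    unfolding cake_eq using e that by auto
  show "closed {r \<in> {0..1}. cpt (e, r) \<in> {w \<in> cake E. Phi w \<le> z}}"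
  proof (cases "0 \<le> z")
    case True
    have "{r \<in> {0..1}. cpt (e, r) \<in> {w \<in> cake E. Phi w \<le> z}} = {0..1} \<inter> ({0, 1} \<union> {r. real k + orient k r \<le> z})"
      using incake True by (auto simp: Phi_cpt)
    moreover have "closed {r. real k + orient k r \<le> z}"
    proof (cases "fl k")
      case True
      then have "{r. real k + orient k r \<le> z} = {real k + 1 - z..}" unfolding orient_def by auto
      then show ?thesis by simp
    next
      case False
      then have "{r. real k + orient k r \<le> z} = {..z - real k}" unfolding orient_def by auto
      then show ?thesis by simp
    qed
    ultimately show ?thesis by (metis closed_Int closed_Un closed_atLeastAtMost finite.emptyI finite.insertI finite_imp_closed)
  next
    case False
    have "{r \<in> {0..1}. cpt (e, r) \<in> {w \<in> cake E. Phi w \<le> z}} \<subseteq> {0, 1}"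
    proof
      fix r assume r: "r \<in> {r \<in> {0..1}. cpt (e, r) \<in> {w \<in> cake E. Phi w \<le> z}}"
      show "r \<in> {0, 1}"
      proof (rule ccontr)
        assume "r \<notin> {0, 1}"
        then have "Phi (cpt (e, r)) = real k + orient k r" "0 < orient k r" using r by (auto simp: Phi_cpt orient_def)
        then show False using r False by auto
      qed
    qed
    then show ?thesis by (meson finite.emptyI finite.insertI finite_imp_closed finite_subset)
  qed
qed

lemma Phi_meas: "Phi \<in> borel_measurable v"
  unfolding borel_measurable_iff_le sp sv using Phi_le_closed closedin_sets by blast

lemma fin_sets: assumes "F \<subseteq> cake E" "finite F" shows "F \<in> sets v" "F \<in> null_sets v" "measure v F = 0"
proof -
  have eq: "F = Phi -` (Phi ` F) \<inter> space v"
    using assms(1) Phi_inj unfolding sp by (auto dest: inj_onD)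
  have "Phi ` F \<in> sets borel" using assms(2) by (intro borel_closed finite_imp_closed) auto
  then show Fs: "F \<in> sets v" by (subst eq) (rule measurable_sets[OF Phi_meas])
  have single: "{x} \<in> sets v" if "x \<in> F" for x
  proof -
    have "{x} = Phi -` {Phi x} \<inter> space v" using that assms(1) Phi_inj unfolding sp by (auto dest: inj_onD)
    then show ?thesis by (metis borel_singleton measurable_sets[OF Phi_meas] sets.empty_sets)
  qed
  have "emeasure v F = (\<Sum>x\<in>F. emeasure v {x})" using emeasure_eq_sum_singleton[OF assms(2) single] .
  also have "\<dots> = 0" by (intro sum.neutral ballI atom) (use assms(1) in blast)
  finally have em: "emeasure v F = 0" .
  then show "F \<in> null_sets v" using Fs by auto
  show "measure v F = 0" using em by (simp add: measure_def)
qed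

definition mu where "mu = distr v borel Phi"

lemma mu_rd: "real_distribution mu"
  unfolding real_distribution_def real_distribution_axioms_def mu_def
  using P.prob_space_distr[OF Phi_meas] by simp

interpretation M: real_distribution mu by (rule mu_rd)

lemma mu_meas: "A \<in> sets borel \<Longrightarrow> measure mu A = measure v (Phi -` A \<inter> cake E)"
  unfolding mu_def using measure_distr[OF Phi_meas] sp by simp

lemma mu_point: "measure mu {z} = 0"
proof -
  have "finite (Phi -` {z} \<inter> cake E)" using finite_vimage_IntI[OF _ Phi_inj] by auto
  then show ?thesis using mu_meas[of "{z}"] fin_sets(3)[of "Phi -` {z} \<inter> cake E"] by auto
qed

definition G where "G = cdf mu"

lemma G_cont: "continuous_on S G"
  unfolding G_def using M.isCont_cdf mu_point by (intro continuous_at_imp_continuous_on) auto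

lemma G_mono: "mono_on S G"
  unfolding G_def by (intro mono_onI M.cdf_nondecreasing)

lemma G0: "G 0 = 0"
proof -
  have sub: "Phi -` {..0} \<inter> cake E \<subseteq> VX \<inter> cake E"
    using Phi_mid_bounds by fastforce
  then have "finite (Phi -` {..0} \<inter> cake E)" using finite_VX finite_subset by blast
  then show ?thesis unfolding G_def cdf_def using mu_meas[of "{..0}"] fin_sets(3) by auto
qed

lemma GL: "G (real L) = 1"
proof -
  have "Phi -` {..real L} \<inter> cake E = cake E"
  proof (intro equalityI subsetI)
    fix p assume p: "p \<in> cake E"
    show "p \<in> Phi -` {..real L} \<inter> cake E"
    proof (cases "p \<in> VX")
      case True
      then obtain w where "Phi p = -1 - real (num w)" using vx_cake[OF p] by metis
      then show ?thesis using p by auto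
    next
      case False
      then show ?thesis using Phi_mid_bounds[OF p] p by auto
    qed
  qed auto
  then show ?thesis unfolding G_def cdf_def using mu_meas[of "{..real L}"] P.prob_space sp by simp
qed

lemma mu_Icc: assumes "a \<le> b" shows "measure mu {a..b} = G b - G a"
proof -
  have s1: "{..b} \<in> sets mu" "{..<a} \<in> sets mu" "{..a} \<in> sets mu" "{a} \<in> sets mu" by auto
  have sub1: "{..<a} \<subseteq> {..b}" using assms by auto
  have "{a..b} = {..b} - {..<a}" using assms by auto
  then have "measure mu {a..b} = measure mu {..b} - measure mu {..<a}"
    using M.finite_measure_Diff[OF s1(1,2) sub1] by simp
  moreover have "measure mu {..<a} = measure mu {..a} - measure mu {a}"
  proof -
    have "{..<a} = {..a} - {a}" by auto
    moreover have "{a} \<subseteq> {..a}" by auto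
    ultimately show ?thesis using M.finite_measure_Diff[OF s1(3,4)] by simp
  qed
  ultimately show ?thesis unfolding G_def cdf_def using mu_point by simp
qed

lemma Arc_meas: "Arc a b \<in> sets v \<and> measure v (Arc a b) = (if a < b then G b - G a else 0)"
proof (cases "a < b")
  case False
  then show ?thesis using Arc_empty[of b a] by simp
next
  case True
  define N where "N = VX \<inter> cake E"
  have N: "N \<subseteq> cake E" "finite N" unfolding N_def using finite_VX by auto
  define P where "P = Phi -` {a..b} \<inter> cake E"
  have Ps: "P \<in> sets v" unfolding P_def using measurable_sets[OF Phi_meas, of "{a..b}"] sp by simp
  have eq: "Arc a b - N = P - N"
  proof (intro equalityI subsetI)
    fix p assume p: "p \<in> Arc a b - N"
    then have pc: "p \<in> cake E" using Arc_sub by blast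
    then have "p \<notin> VX" using p unfolding N_def by blast
    then have "a \<le> Phi p \<and> Phi p \<le> b" using Arc_mid[OF pc] p by blast
    then show "p \<in> P - N" using p pc unfolding P_def by auto
  next
    fix p assume p: "p \<in> P - N"
    then have pc: "p \<in> cake E" unfolding P_def by blast
    then have "p \<notin> VX" using p unfolding N_def by blast
    moreover have "a \<le> Phi p \<and> Phi p \<le> b" using p unfolding P_def by auto
    ultimately have "p \<in> Arc a b" using Arc_mid[OF pc] True by blast
    then show "p \<in> Arc a b - N" using p by blast
  qed
  have AN: "Arc a b \<inter> N \<in> sets v" using fin_sets(1)[of "Arc a b \<inter> N"] N by auto
  have "Arc a b = (P - N) \<union> (Arc a b \<inter> N)" using eq by auto
  then have As: "Arc a b \<in> sets v" using Ps fin_sets(1)[OF N] AN by (metis sets.Diff sets.Un)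
  have "measure v (Arc a b) = measure v (Arc a b - N)"
    using measure_Diff_null_set[OF As fin_sets(2)[OF N]] by simp
  also have "\<dots> = measure v P" unfolding eq using measure_Diff_null_set[OF Ps fin_sets(2)[OF N]] by simp
  also have "\<dots> = measure mu {a..b}" unfolding P_def using mu_meas by simp
  also have "\<dots> = G b - G a" using mu_Icc True by simp
  finally show ?thesis using As True by simp
qed

lemma compl_meas: assumes "A \<in> sets v" "B \<in> sets v" "A \<union> B = cake E" "finite (A \<inter> B)"
  shows "measure v B = 1 - measure v A"
proof -
  have AB: "A \<inter> B \<subseteq> cake E" using assms(3) by auto
  have BA: "B - A \<in> sets v" using assms(1,2) by (intro sets.Diff)
  have "measure v (A \<union> (B - A)) = measure v A + measure v (B - A)"
    using P.finite_measure_Union[OF assms(1) BA] by blast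
  moreover have "A \<union> (B - A) = space v" using assms(3) sp by blast
  moreover have "B - A = B - (A \<inter> B)" by blast
  moreover have "measure v (B - (A \<inter> B)) = measure v B"
    using measure_Diff_null_set[OF assms(2) fin_sets(2)[OF AB assms(4)]] .
  ultimately have "1 = measure v A + measure v B" using P.prob_space by metis
  then show ?thesis by linarith
qed

end

context rtree begin

lemma comps_arc:
  assumes dh: "\<And>w. w \<in> V \<Longrightarrow> depth w \<le> h" and h1: "1 \<le> h"
    and xy: "0 \<le> x" "x \<le> y" "y \<le> real L"
  shows "num_components E (Arc x y) \<le> h + 1"
proof (cases "x < y")
  case True
  obtain T where T: "finite T" "\<forall>p\<in>Arc x y. \<exists>q\<in>T. path_component_of (subtopology (cake_top E) (Arc x y)) p q"
    "card T \<le> 1 \<or> (Vtx R \<in> T \<and> (\<exists>w\<in>V. card T \<le> Suc (depth w)))"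
    using arc_conn[OF xy(1) True xy(3)] by blast
  have "card (path_components_of (subtopology (cake_top E) (Arc x y))) \<le> card T"
    using T(1,2) topspace_cake_sub[OF Arc_sub] by (intro card_pc_le) auto
  moreover have "card T \<le> h + 1"
  proof (cases "card T \<le> 1")
    case False
    then obtain w where "w \<in> V" "card T \<le> Suc (depth w)" using T(3) by blast
    then show ?thesis using dh[of w] by linarith
  qed (use h1 in linarith)
  ultimately show ?thesis unfolding num_components_def by linarith
next
  case False
  then have "Arc x y = {}" using Arc_empty by simp
  then show ?thesis unfolding num_components_def
    using card_pc_le[of "{}" "subtopology (cake_top E) {}"] by simp
qed

lemma comps_compl:
  assumes dh: "\<And>w. w \<in> V \<Longrightarrow> depth w \<le> h" and h1: "1 \<le> h"
    and xy: "0 \<le> x" "x \<le> y" "y \<le> real L"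
  shows "num_components E (Arc 0 x \<union> Arc y (real L)) \<le> h + 1"
proof -
  let ?B = "Arc 0 x \<union> Arc y (real L)"
  obtain T where T: "finite T" "\<forall>p\<in>Arc y (real L). \<exists>q\<in>T. path_component_of (subtopology (cake_top E) (Arc y (real L))) p q"
    "card T \<le> 1 \<or> (Vtx R \<in> T \<and> (\<exists>w\<in>V. card T \<le> Suc (depth w)))"
  proof (cases "y < real L")
    case True
    have "0 \<le> y" using xy by linarith
    then obtain T where "finite T" "\<forall>p\<in>Arc y (real L). \<exists>q\<in>T. path_component_of (subtopology (cake_top E) (Arc y (real L))) p q"
      "card T \<le> 1 \<or> (Vtx R \<in> T \<and> (\<exists>w\<in>V. card T \<le> Suc (depth w)))"
      using arc_conn[OF _ True] by blast
    then show ?thesis using that by blast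
  next
    case False
    then have "Arc y (real L) = {}" using Arc_empty by simp
    then show ?thesis using that[of "{}"] by simp
  qed
  have cT: "card (insert (Vtx R) T) \<le> h + 1"
  proof (cases "card T \<le> 1")
    case True
    then have "card (insert (Vtx R) T) \<le> 2" using T(1) by (simp add: card_insert_if)
    then show ?thesis using h1 by linarith
  next
    case False
    then obtain w where "Vtx R \<in> T" "w \<in> V" "card T \<le> Suc (depth w)" using T(3) by blast
    then show ?thesis using dh[of w] by (simp add: insert_absorb)
  qed
  have "\<forall>p\<in>?B. \<exists>q\<in>insert (Vtx R) T. path_component_of (subtopology (cake_top E) ?B) p q"
  proof
    fix p assume "p \<in> ?B"
    then consider "p \<in> Arc 0 x" | "p \<in> Arc y (real L)" by blast
    then show "\<exists>q\<in>insert (Vtx R) T. path_component_of (subtopology (cake_top E) ?B) p q"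
    proof cases
      case 1
      then have "path_component_of (subtopology (cake_top E) (Arc 0 x)) p (Vtx R)" by (rule prefix_all)
      then have "path_component_of (subtopology (cake_top E) ?B) p (Vtx R)"
        by (rule path_component_of_mono) blast
      then show ?thesis by blast
    next
      case 2
      then obtain q where q: "q \<in> T" "path_component_of (subtopology (cake_top E) (Arc y (real L))) p q" using T(2) by blast
      have "path_component_of (subtopology (cake_top E) ?B) p q"
        by (rule path_component_of_mono[OF q(2)]) blast
      then show ?thesis using \<open>q \<in> T\<close> by blast
    qed
  qed
  then have "card (path_components_of (subtopology (cake_top E) ?B)) \<le> card (insert (Vtx R) T)"
    using T(1) topspace_cake_sub[of ?B] Arc_sub by (intro card_pc_le) auto
  then show ?thesis using cT unfolding num_components_def by linarith
qed

end

theorem mainTheorem4: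
  fixes V :: "'v set" and E :: "('v \<times> 'v) set"
    and vA vB :: "'v cake_pt measure" and t :: real and h :: nat
  assumes "is_tree V E"
    and "h = min_height V E" and "h \<ge> 1"
    and "valuation E vA" and "valuation E vB"
    and "0 \<le> t" and "t \<le> 1"
  shows "\<exists>\<alpha> \<beta>. is_division E \<alpha> \<beta> \<and> weighted_consensus vA vB t \<alpha> \<beta>
           \<and> num_components E \<alpha> \<le> h + 1 \<and> num_components E \<beta> \<le> h + 1"
proof -
  note tr = assms(1)
  have finV: "finite V" and Vne: "V \<noteq> {}" using tr unfolding is_tree_def by auto
  have "h \<in> (\<lambda>R. height_at V E R) ` V"
    unfolding assms(2) min_height_def using finV Vne by (intro Min_in) auto
  then obtain R where hR: "R \<in> V" "height_at V E R = h" by auto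
  interpret rtree V E R using tr hR(1) by unfold_locales
  interpret A: rtree_v V E R vA using assms(4) by unfold_locales
  interpret B: rtree_v V E R vB using assms(5) by unfold_locales
  have dh: "depth w \<le> h" if "w \<in> V" for w
  proof -
    have "gdist E R w \<le> Max ((\<lambda>w. gdist E R w) ` V)" using finV that by (intro Max_ge) auto
    then show ?thesis using hR(2) unfolding depth_def height_at_def by simp
  qed
  have Lpos: "real L > 0"
  proof (rule ccontr)
    assume "\<not> real L > 0"
    then have "L = 0" by simp
    then have "card E = 0" using L_card by simp
    then have "card V = 1" using cardE by simp
    then have "V = {R}" using hR(1) finV by (metis card_1_singletonE singletonD)
    then have "height_at V E R = depth R" unfolding height_at_def depth_def by simp
    then show False using hR(2) depth_R assms(3) by simp
  qed
  obtain x y where xy: "0 \<le> x" "x \<le> y" "y \<le> real L" "A.G y - A.G x = B.G y - B.G x"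
      "A.G y - A.G x = t \<or> A.G y - A.G x = 1 - t"
    using mono_chord[OF Lpos A.G_cont B.G_cont A.G_mono B.G_mono A.G0 A.GL B.G0 B.GL assms(6,7)] by blast
  define c where "c = A.G y - A.G x"
  have mA: "measure vA (Arc x y) = c"
    using A.Arc_meas[of x y] xy unfolding c_def by (cases "x < y") auto
  have mB: "measure vB (Arc x y) = c"
    using B.Arc_meas[of x y] xy unfolding c_def by (cases "x < y") auto
  define \<beta>0 where "\<beta>0 = Arc 0 x \<union> Arc y (real L)"
  have un: "Arc x y \<union> \<beta>0 = cake E" using cover[OF xy(1-3)] unfolding \<beta>0_def by blast
  have fi: "finite (Arc x y \<inter> \<beta>0)" using inter_finite[OF xy(1-3)] unfolding \<beta>0_def .
  have sA: "Arc x y \<in> sets vA" "\<beta>0 \<in> sets vA" unfolding \<beta>0_def using A.Arc_meas by auto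
  have sB: "Arc x y \<in> sets vB" "\<beta>0 \<in> sets vB" unfolding \<beta>0_def using B.Arc_meas by auto
  have mA': "measure vA \<beta>0 = 1 - c" using A.compl_meas[OF sA un fi] mA by simp
  have mB': "measure vB \<beta>0 = 1 - c" using B.compl_meas[OF sB un fi] mB by simp
  have cA: "num_components E (Arc x y) \<le> h + 1" using comps_arc[OF dh assms(3) xy(1-3)] by blast
  have cB: "num_components E \<beta>0 \<le> h + 1" unfolding \<beta>0_def using comps_compl[OF dh assms(3) xy(1-3)] by blast
  have pA: "is_piece E (Arc x y)" by (rule is_piece_Arc)
  have pB: "is_piece E \<beta>0" unfolding \<beta>0_def by (rule is_piece_Arc2)
  show ?thesis
  proof (cases "c = t")
    case True
    have "is_division E (Arc x y) \<beta>0" unfolding is_division_def using pA pB un fi by blast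
    moreover have "weighted_consensus vA vB t (Arc x y) \<beta>0"
      unfolding weighted_consensus_def using mA mB mA' mB' True by simp
    ultimately show ?thesis using cA cB by blast
  next
    case False
    then have c1: "c = 1 - t" using xy(5) unfolding c_def by blast
    have "is_division E \<beta>0 (Arc x y)" unfolding is_division_def using pA pB un fi
      by (simp add: Int_commute Un_commute)
    moreover have "weighted_consensus vA vB t \<beta>0 (Arc x y)"
      unfolding weighted_consensus_def using mA mB mA' mB' c1 by simp
    ultimately show ?thesis using cA cB by blast
  qed
qed

end
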